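(* Let $\mathbb{F}$ be an algebraically closed field of characteristic zero and $J_1=E_{12}$. Let $\underline{A}=(J_1,A_2,A_3)$ and $\underline{B}=(J_1,B_2,B_3)$ be elements of $\mathcal{N}_3^3$ such that $f(\underline{A})=f(\underline{B})$ for all $f\in S_{3,3}$. Then $f(\underline{A})=f(\underline{B})$ for all $f\in P_{3,3}$.
   Context: $E_{ij}$ is the $3\times3$ matrix unit. $\mathcal{N}_3^3$ is the set of triples of nilpotent $3\times3$ matrices over $\mathbb{F}$. $\mathrm{tr}(Y_{i_1}\cdots Y_{i_r})$ denotes the function $\underline{A}\mapsto\mathrm{tr}(A_{i_1}\cdots A_{i_r})$. $S_{3,3}$ is the set consisting of: $\mathrm{tr}(Y_iY_j),\ \mathrm{tr}(Y_i^2Y_j),\ \mathrm{tr}(Y_iY_j^2),\ \mathrm{tr}(Y_i^2Y_j^2),\ \mathrm{tr}(Y_i^2Y_j^2Y_iY_j)$ for $1\le i<j\le3$; $\mathrm{tr}(Y_1Y_2Y_3)$, $\mathrm{tr}(Y_1Y_3Y_2)$; $\mathrm{tr}(Y_i^2Y_jY_k)$ for $\{i,j,k\}=\{1,2,3\}$; $\mathrm{tr}(Y_1^2Y_2Y_1Y_3)$, $\mathrm{tr}(Y_2^2Y_1Y_2Y_3)$, $\mathrm{tr}(Y_3^2Y_1Y_3Y_2)$. $P_{3,3}=S_{3,3}\sqcup P'_{3,3}$, where $P'_{3,3}$ consists of $\mathrm{tr}(Y_i^2Y_j^2Y_k)$ and $\mathrm{tr}(Y_i^2Y_j^2Y_iY_k)$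 for $\{i,j,k\}=\{1,2,3\}$, and $\mathrm{tr}(Y_1^2Y_2^2Y_3^2)$. *)

theory Defs
  imports "HOL-Analysis.Analysis" "HOL-Computational_Algebra.Polynomial"
begin

type_synonym 'a mat3 = "'a^3^3"

primrec mpow :: "'a::semiring_1 mat3 \<Rightarrow> nat \<Rightarrow> 'a mat3" where
  "mpow A 0 = mat 1"
| "mpow A (Suc k) = A ** mpow A k"

definition nilpotent3 :: "'a::semiring_1 mat3 \<Rightarrow> bool" where
  "nilpotent3 A \<longleftrightarrow> (\<exists>k. mpow A k = mat 0)"

text \<open>The matrix unit E_12 (rows/columns 1,2,3 of the paper are indices 0,1,2 of type 3).\<close>
definition J1 :: "'a::semiring_1 mat3" where
  "J1 = (\<chi> r c. if r = (0::3) \<and> c = (1::3) then 1 else 0)"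

definition triple :: "'a mat3 \<Rightarrow> 'a mat3 \<Rightarrow> 'a mat3 \<Rightarrow> nat \<Rightarrow> 'a mat3" where
  "triple X1 X2 X3 = (\<lambda>i. if i = 1 then X1 else if i = 2 then X2 else X3)"

definition in_N33 :: "(nat \<Rightarrow> 'a::semiring_1 mat3) \<Rightarrow> bool" where
  "in_N33 A \<longleftrightarrow> (\<forall>i\<in>{1,2,3}. nilpotent3 (A i))"

definition trw :: "(nat \<Rightarrow> 'a::comm_semiring_1 mat3) \<Rightarrow> nat list \<Rightarrow> 'a" where
  "trw A w = trace (foldr (\<lambda>i M. A i ** M) w (mat 1))"

definition S33 :: "nat list set" where
  "S33 =
     {[i,j] | i j. 1 \<le> i \<and> i < j \<and> j \<le> 3}
   \<union> {[i,i,j] | i j. 1 \<le> i \<and> i < j \<and> j \<le> 3}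
   \<union> {[i,j,j] | i j. 1 \<le> i \<and> i < j \<and> j \<le> 3}
   \<union> {[i,i,j,j] | i j. 1 \<le> i \<and> i < j \<and> j \<le> 3}
   \<union> {[i,i,j,j,i,j] | i j. 1 \<le> i \<and> i < j \<and> j \<le> 3}
   \<union> {[1,2,3], [1,3,2]}
   \<union> {[i,i,j,k] | i j k. {i,j,k} = {1,2,3}}
   \<union> {[1,1,2,1,3], [2,2,1,2,3], [3,3,1,3,2]}"

definition P33' :: "nat list set" where
  "P33' =
     {[i,i,j,j,k] | i j k. {i,j,k} = {1,2,3}}
   \<union> {[i,i,j,j,i,k] | i j k. {i,j,k} = {1,2,3}}
   \<union> {[1,1,2,2,3,3]}"

definition P33 :: "nat list set" where
  "P33 = S33 \<union> P33'"

end

theory Submission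
  imports Defs
begin

definition ee :: "'a::comm_ring_1 mat3 \<Rightarrow> 'a" where "ee M = M$1$3"

lemma mpow_eigen:
  fixes A :: "'a::field^3^3"
  assumes "A *v x = l *s x"
  shows "mpow A n *v x = (l ^ n) *s x"
proof (induction n)
  case 0
  then show ?case by (simp add: matrix_vector_mul_lid)
next
  case (Suc n)
  have "mpow A (Suc n) *v x = A *v (mpow A n *v x)"
    by (simp add: matrix_vector_mul_assoc)
  also have "\<dots> = A *v ((l ^ n) *s x)" using Suc by simp
  also have "\<dots> = (l ^ n) *s (A *v x)"
    by (simp add: vec_eq_iff matrix_vector_mult_def sum_3 algebra_simps)
  also have "\<dots> = (l ^ Suc n) *s x" using assms by (simp add: vector_smult_assoc mult.commute)
  finally show ?case .
qed

lemma nil_det_shift: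
  fixes A :: "'a::field^3^3"
  assumes "nilpotent3 A" "l \<noteq> 0"
  shows "det (A - mat l) \<noteq> 0"
proof
  assume d: "det (A - mat l) = 0"
  obtain k where k: "mpow A k = mat 0" using assms(1) unfolding nilpotent3_def by blast
  have "\<not> invertible (A - mat l)" using d invertible_det_nz by blast
  then have "\<not> (\<exists>B. B ** (A - mat l) = mat 1)" using invertible_left_inverse by blast
  then obtain x where x: "(A - mat l) *v x = 0" "x \<noteq> 0"
    using matrix_left_invertible_ker by blast
  have "A *v x = l *s x"
    using x(1) by (simp add: vec_eq_iff matrix_vector_mult_def sum_3 forall_3 mat_def algebra_simps)
  then have "mpow A k *v x = (l ^ k) *s x" by (rule mpow_eigen)
  then have "(l ^ k) *s x = 0" using k by (simp add: vec_eq_iff matrix_vector_mult_def mat_def)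
  then show False using x(2) assms(2) by (simp add: vec_eq_iff)
qed

lemma mpow_det:
  fixes A :: "'a::field^3^3"
  shows "det (mpow A n) = det A ^ n"
  by (induction n) (simp_all add: det_mul)

lemma nil_facts:
  fixes A :: "'a::{alg_closed_field, field_char_0}^3^3"
  assumes "nilpotent3 A"
  shows "trace A = 0 \<and> trace (A**A) = 0 \<and> det A = 0"
proof -
  obtain k where k: "mpow A k = mat 0" using assms unfolding nilpotent3_def by blast
  have "det A ^ k = 0"
  proof -
    have "det A ^ k = det (mat 0 :: 'a^3^3)" using k mpow_det by metis
    also have "\<dots> = 0" by (simp add: det_3 mat_def)
    finally show ?thesis .
  qed
  then have d0: "det A = 0" by simp
  define c1 where "c1 = trace A"
  define c2 where "c2 = A$1$1*A$2$2 + A$1$1*A$3$3 + A$2$2*A$3$3 - A$1$2*A$2$1 - A$1$3*A$3$1 - A$2$3*A$3$2"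
  have p: "det (A - mat l) = l * (c1 * l - l * l - c2)" for l
    using d0 unfolding c1_def c2_def trace_def det_3
    by (simp add: sum_3 mat_def) algebra
  obtain l0 where l0: "(\<Sum>k\<le>2. (\<lambda>i. if i = 0 then - c2 else if i = 1 then c1 else (-1::'a)) k * l0 ^ k) = 0"
    using alg_closed[of 2 "\<lambda>i. if i = 0 then - c2 else if i = 1 then c1 else (-1::'a)"] by auto
  then have l0': "c1 * l0 - l0 * l0 - c2 = 0"
    by (simp add: eval_nat_numeral algebra_simps)
  have "det (A - mat l0) = 0" using p l0' by simp
  then have "l0 = 0" using nil_det_shift[OF assms] by blast
  then have c20: "c2 = 0" using l0' by simp
  have "det (A - mat c1) = 0" using p c20 by (simp add: power2_eq_square)
  then have c10: "c1 = 0" using nil_det_shift[OF assms] by blast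
  have "trace (A**A) = c1^2 - 2 * c2"
    unfolding c1_def c2_def trace_def by (simp add: sum_3 matrix_matrix_mult_def) algebra
  then show ?thesis using c10 c20 d0 c1_def by simp
qed
lemma I1:
  fixes a b :: "'a::field_char_0^3^3"
  assumes "trace a = 0" "trace (a**a) = 0" "det a = 0" "trace b = 0" "trace (b**b) = 0" "det b = 0"
  shows "ee a * ee (a**a**b**b) = - ee (b**a) * ee (a**a**b) - ee (a**a) * ee (b**b**a) - ee b * ee (a**b**a**a) + ee b * ee (a**a) * trace (a**b) + ee a * ee b * trace (a**a**b)"
  using assms
  unfolding ee_def trace_def det_3 matrix_matrix_mult_def
  by (simp add: sum_3) algebra

lemma I2:
  fixes a b :: "'a::field_char_0^3^3"
  assumes "trace a = 0" "trace (a**a) = 0" "det a = 0" "trace b = 0" "trace (b**b) = 0" "det b = 0"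
  shows "ee b * ee (a**a**b**b) = ee a * ee (b**a**b**b) - ee (b**a) * ee(a**b**b) - ee(b**b) * ee(b**a**a)"
  using assms
  unfolding ee_def trace_def det_3 matrix_matrix_mult_def
  by (simp add: sum_3) algebra

lemma I3:
  fixes a b :: "'a::field_char_0^3^3"
  assumes "trace a = 0" "trace (a**a) = 0" "det a = 0" "trace b = 0" "trace (b**b) = 0" "det b = 0"
    "ee a = 0" "ee b = 0"
  shows "ee (a**a) * ee (a**a**b**b) = - ee (b**a**a) * ee (a**a**b) - ee (b**a**a) * ee (b**a**a) - ee (b**a) * ee (a**b**a**a)"
  using assms
  unfolding ee_def trace_def det_3 matrix_matrix_mult_def
  by (simp add: sum_3) algebra

lemma I5:
  fixes a b :: "'a::field_char_0^3^3"
  assumes "trace a = 0" "trace (a**a) = 0" "det a = 0" "trace b = 0" "trace (b**b) = 0" "det b = 0"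
  shows "ee (a**a) * ee (a**a**b**b**a) = ee (a**a**b) * ee (a**b**a**a) - ee (a**a) * ee (a**b) * trace (a**a**b) + ee (a**a) * ee (a**a) * trace (a**b**b)"
  using assms
  unfolding ee_def trace_def det_3 matrix_matrix_mult_def
  by (simp add: sum_3) algebra

lemma I4:
  fixes a b :: "'a::field_char_0^3^3"
  assumes "trace a = 0" "trace (a**a) = 0" "det a = 0" "trace b = 0" "trace (b**b) = 0" "det b = 0"
  shows "ee a * ee a * ee (a**a**b**b**a) = - ee (a**a) * ee (b**a) * ee (a**a**b) - ee (a**a) * ee (a**a) * ee (b**b**a)
    - ee b * ee (a**a) * ee (a**b**a**a) + ee b * ee (a**a) * ee (a**a) * trace (a**b)
    - ee a * ee (a**a**b) * ee (a**a**b) + ee a * ee (a**b) * ee (a**b**a**a)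
    - ee a * ee (a**a) * ee (a**b) * trace (a**b) + ee a * ee a * ee (a**a**b) * trace (a**b)
    - ee a * ee a * ee (a**b) * trace (a**a**b) + ee a * ee a * ee (a**a) * trace (a**b**b)"
  using assms
  unfolding ee_def trace_def det_3 matrix_matrix_mult_def
  by (simp add: sum_3) algebra

lemma L1:
  fixes a b :: "'a::field_char_0^3^3"
  assumes "trace a = 0" "trace (a**a) = 0" "det a = 0" "trace b = 0" "trace (b**b) = 0" "det b = 0"
    "ee a = 0" "ee (a**a) = 0"
  shows "ee (a**a**b**b) = 0"
  using assms
  unfolding ee_def trace_def det_3 matrix_matrix_mult_def
  by (simp add: sum_3) algebra

lemma L3:
  fixes a b :: "'a::field_char_0^3^3"
  assumes "trace a = 0" "trace (a**a) = 0" "det a = 0" "trace b = 0" "trace (b**b) = 0" "det b = 0"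
    "ee a = 0" "ee (a**a) = 0"
  shows "ee (a**a**b**b**a) = 0"
  using assms
  unfolding ee_def trace_def det_3 matrix_matrix_mult_def
  by (simp add: sum_3) algebra

lemma J1_ent: "J1 $ i $ j = (if i = 3 \<and> j = 1 then 1 else 0)"
  unfolding J1_def by simp

lemma tw0: "trw (triple J1 a b) [1,2] = ee a"
  for a b :: "'a::field_char_0^3^3"
  unfolding trw_def triple_def ee_def
  apply (simp add: matrix_mul_rid)
  apply (simp add: matrix_matrix_mult_def trace_def sum_3 J1_ent)?
  apply (algebra)?
  done

lemma tw1: "trw (triple J1 a b) [1,3] = ee b"
  for a b :: "'a::field_char_0^3^3"
  unfolding trw_def triple_def ee_def
  apply (simp add: matrix_mul_rid)
  apply (simp add: matrix_matrix_mult_def trace_def sum_3 J1_ent)?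
  apply (algebra)?
  done

lemma tw2: "trw (triple J1 a b) [1,2,2] = ee (a**a)"
  for a b :: "'a::field_char_0^3^3"
  unfolding trw_def triple_def ee_def
  apply (simp add: matrix_mul_rid)
  apply (simp add: matrix_matrix_mult_def trace_def sum_3 J1_ent)?
  apply (algebra)?
  done

lemma tw3: "trw (triple J1 a b) [1,3,3] = ee (b**b)"
  for a b :: "'a::field_char_0^3^3"
  unfolding trw_def triple_def ee_def
  apply (simp add: matrix_mul_rid)
  apply (simp add: matrix_matrix_mult_def trace_def sum_3 J1_ent)?
  apply (algebra)?
  done

lemma tw4: "trw (triple J1 a b) [1,2,3] = ee (a**b)"
  for a b :: "'a::field_char_0^3^3"
  unfolding trw_def triple_def ee_def
  apply (simp add: matrix_mul_rid)
  apply (simp add: matrix_matrix_mult_def trace_def sum_3 J1_ent)?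
  apply (algebra)?
  done

lemma tw5: "trw (triple J1 a b) [1,3,2] = ee (b**a)"
  for a b :: "'a::field_char_0^3^3"
  unfolding trw_def triple_def ee_def
  apply (simp add: matrix_mul_rid)
  apply (simp add: matrix_matrix_mult_def trace_def sum_3 J1_ent)?
  apply (algebra)?
  done

lemma tw6: "trw (triple J1 a b) [2,2,1,3] = ee (b**a**a)"
  for a b :: "'a::field_char_0^3^3"
  unfolding trw_def triple_def ee_def
  apply (simp add: matrix_mul_rid)
  apply (simp add: matrix_matrix_mult_def trace_def sum_3 J1_ent)?
  apply (algebra)?
  done

lemma tw7: "trw (triple J1 a b) [2,2,3,1] = ee (a**a**b)"
  for a b :: "'a::field_char_0^3^3"
  unfolding trw_def triple_def ee_def
  apply (simp add: matrix_mul_rid)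
  apply (simp add: matrix_matrix_mult_def trace_def sum_3 J1_ent)?
  apply (algebra)?
  done

lemma tw8: "trw (triple J1 a b) [3,3,1,2] = ee (a**b**b)"
  for a b :: "'a::field_char_0^3^3"
  unfolding trw_def triple_def ee_def
  apply (simp add: matrix_mul_rid)
  apply (simp add: matrix_matrix_mult_def trace_def sum_3 J1_ent)?
  apply (algebra)?
  done

lemma tw9: "trw (triple J1 a b) [3,3,2,1] = ee (b**b**a)"
  for a b :: "'a::field_char_0^3^3"
  unfolding trw_def triple_def ee_def
  apply (simp add: matrix_mul_rid)
  apply (simp add: matrix_matrix_mult_def trace_def sum_3 J1_ent)?
  apply (algebra)?
  done

lemma tw10: "trw (triple J1 a b) [2,2,1,2,3] = ee (a**b**a**a)"
  for a b :: "'a::field_char_0^3^3"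
  unfolding trw_def triple_def ee_def
  apply (simp add: matrix_mul_rid)
  apply (simp add: matrix_matrix_mult_def trace_def sum_3 J1_ent)?
  apply (algebra)?
  done

lemma tw11: "trw (triple J1 a b) [3,3,1,3,2] = ee (b**a**b**b)"
  for a b :: "'a::field_char_0^3^3"
  unfolding trw_def triple_def ee_def
  apply (simp add: matrix_mul_rid)
  apply (simp add: matrix_matrix_mult_def trace_def sum_3 J1_ent)?
  apply (algebra)?
  done

lemma tw12: "trw (triple J1 a b) [2,3] = trace (a**b)"
  for a b :: "'a::field_char_0^3^3"
  unfolding trw_def triple_def ee_def
  apply (simp add: matrix_mul_rid)
  apply (simp add: matrix_matrix_mult_def trace_def sum_3 J1_ent)?
  apply (algebra)?
  done

lemma tw13: "trw (triple J1 a b) [2,2,3] = trace (a**a**b)"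
  for a b :: "'a::field_char_0^3^3"
  unfolding trw_def triple_def ee_def
  apply (simp add: matrix_mul_rid)
  apply (simp add: matrix_matrix_mult_def trace_def sum_3 J1_ent)?
  apply (algebra)?
  done

lemma tw14: "trw (triple J1 a b) [2,3,3] = trace (a**b**b)"
  for a b :: "'a::field_char_0^3^3"
  unfolding trw_def triple_def ee_def
  apply (simp add: matrix_mul_rid)
  apply (simp add: matrix_matrix_mult_def trace_def sum_3 J1_ent)?
  apply (algebra)?
  done

lemma tw15: "trw (triple J1 a b) [2,3] = trace (b**a)"
  for a b :: "'a::field_char_0^3^3"
  unfolding trw_def triple_def ee_def
  apply (simp add: matrix_mul_rid)
  apply (simp add: matrix_matrix_mult_def trace_def sum_3 J1_ent)?
  apply (algebra)?
  done

lemma tw16: "trw (triple J1 a b) [2,2,3] = trace (b**a**a)"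
  for a b :: "'a::field_char_0^3^3"
  unfolding trw_def triple_def ee_def
  apply (simp add: matrix_mul_rid)
  apply (simp add: matrix_matrix_mult_def trace_def sum_3 J1_ent)?
  apply (algebra)?
  done

lemma tw17: "trw (triple J1 a b) [2,3,3] = trace (b**b**a)"
  for a b :: "'a::field_char_0^3^3"
  unfolding trw_def triple_def ee_def
  apply (simp add: matrix_mul_rid)
  apply (simp add: matrix_matrix_mult_def trace_def sum_3 J1_ent)?
  apply (algebra)?
  done

lemma tw18: "trw (triple J1 a b) [2,2,3,3,1] = ee (a**a**b**b)"
  for a b :: "'a::field_char_0^3^3"
  unfolding trw_def triple_def ee_def
  apply (simp add: matrix_mul_rid)
  apply (simp add: matrix_matrix_mult_def trace_def sum_3 J1_ent)?
  apply (algebra)?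
  done

lemma tw19: "trw (triple J1 a b) [3,3,2,2,1] = ee (b**b**a**a)"
  for a b :: "'a::field_char_0^3^3"
  unfolding trw_def triple_def ee_def
  apply (simp add: matrix_mul_rid)
  apply (simp add: matrix_matrix_mult_def trace_def sum_3 J1_ent)?
  apply (algebra)?
  done

lemma tw20: "trw (triple J1 a b) [2,2,3,3,2,1] = ee (a**a**b**b**a)"
  for a b :: "'a::field_char_0^3^3"
  unfolding trw_def triple_def ee_def
  apply (simp add: matrix_mul_rid)
  apply (simp add: matrix_matrix_mult_def trace_def sum_3 J1_ent)?
  apply (algebra)?
  done

lemma tw21: "trw (triple J1 a b) [3,3,2,2,3,1] = ee (b**b**a**a**b)"
  for a b :: "'a::field_char_0^3^3"
  unfolding trw_def triple_def ee_def
  apply (simp add: matrix_mul_rid)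
  apply (simp add: matrix_matrix_mult_def trace_def sum_3 J1_ent)?
  apply (algebra)?
  done

lemma tz0: "trw (triple J1 a b) [1,1,2,2,3] = (0::'a::field_char_0)"
  unfolding trw_def triple_def
  apply (simp add: matrix_mul_rid)
  apply (simp add: matrix_matrix_mult_def trace_def sum_3 J1_ent)?
  done

lemma tz1: "trw (triple J1 a b) [1,1,3,3,2] = (0::'a::field_char_0)"
  unfolding trw_def triple_def
  apply (simp add: matrix_mul_rid)
  apply (simp add: matrix_matrix_mult_def trace_def sum_3 J1_ent)?
  done

lemma tz2: "trw (triple J1 a b) [2,2,1,1,3] = (0::'a::field_char_0)"
  unfolding trw_def triple_def
  apply (simp add: matrix_mul_rid)
  apply (simp add: matrix_matrix_mult_def trace_def sum_3 J1_ent)?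
  done

lemma tz3: "trw (triple J1 a b) [3,3,1,1,2] = (0::'a::field_char_0)"
  unfolding trw_def triple_def
  apply (simp add: matrix_mul_rid)
  apply (simp add: matrix_matrix_mult_def trace_def sum_3 J1_ent)?
  done

lemma tz4: "trw (triple J1 a b) [1,1,2,2,1,3] = (0::'a::field_char_0)"
  unfolding trw_def triple_def
  apply (simp add: matrix_mul_rid)
  apply (simp add: matrix_matrix_mult_def trace_def sum_3 J1_ent)?
  done

lemma tz5: "trw (triple J1 a b) [1,1,3,3,1,2] = (0::'a::field_char_0)"
  unfolding trw_def triple_def
  apply (simp add: matrix_mul_rid)
  apply (simp add: matrix_matrix_mult_def trace_def sum_3 J1_ent)?
  done

lemma tz6: "trw (triple J1 a b) [2,2,1,1,2,3] = (0::'a::field_char_0)"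
  unfolding trw_def triple_def
  apply (simp add: matrix_mul_rid)
  apply (simp add: matrix_matrix_mult_def trace_def sum_3 J1_ent)?
  done

lemma tz7: "trw (triple J1 a b) [3,3,1,1,3,2] = (0::'a::field_char_0)"
  unfolding trw_def triple_def
  apply (simp add: matrix_mul_rid)
  apply (simp add: matrix_matrix_mult_def trace_def sum_3 J1_ent)?
  done

lemma tz8: "trw (triple J1 a b) [1,1,2,2,3,3] = (0::'a::field_char_0)"
  unfolding trw_def triple_def
  apply (simp add: matrix_mul_rid)
  apply (simp add: matrix_matrix_mult_def trace_def sum_3 J1_ent)?
  done


lemma tsw1: "trace (b**a) = trace (a**(b::'a::comm_ring_1^3^3))"
  by (rule trace_mul_sym)
lemma tsw2: "trace (b**b**a) = trace (a**b**(b::'a::comm_ring_1^3^3))"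
  by (metis trace_mul_sym matrix_mul_assoc)
lemma tsw3: "trace (b**a**a) = trace (a**a**(b::'a::comm_ring_1^3^3))"
  by (metis trace_mul_sym matrix_mul_assoc)

lemma core:
  fixes a b a' b' :: "'a::field_char_0^3^3"
  assumes na: "trace a = 0" "trace (a**a) = 0" "det a = 0"
      and nb: "trace b = 0" "trace (b**b) = 0" "det b = 0"
      and na': "trace a' = 0" "trace (a'**a') = 0" "det a' = 0"
      and nb': "trace b' = 0" "trace (b'**b') = 0" "det b' = 0"
      and h1: "ee a = ee a'" and h2: "ee b = ee b'" and h3: "ee (a**a) = ee (a'**a')"
      and h4: "ee (b**b) = ee (b'**b')" and h5: "ee (a**b) = ee (a'**b')" and h6: "ee (b**a) = ee (b'**a')"
      and h7: "ee (b**a**a) = ee (b'**a'**a')" and h8: "ee (a**a**b) = ee (a'**a'**b')"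
      and h9: "ee (a**b**b) = ee (a'**b'**b')" and h10: "ee (b**b**a) = ee (b'**b'**a')"
      and h11: "ee (a**b**a**a) = ee (a'**b'**a'**a')" and h12: "ee (b**a**b**b) = ee (b'**a'**b'**b')"
      and h13: "trace (a**b) = trace (a'**b')" and h14: "trace (a**a**b) = trace (a'**a'**b')"
      and h15: "trace (a**b**b) = trace (a'**b'**b')"
  shows "ee (a**a**b**b) = ee (a'**a'**b'**b') \<and> ee (a**a**b**b**a) = ee (a'**a'**b'**b'**a')"
proof
  note hs = h1 h2 h3 h4 h5 h6 h7 h8 h9 h10 h11 h12 h13 h14 h15
  show "ee (a**a**b**b) = ee (a'**a'**b'**b')"
  proof (cases "ee a = 0")
    case False
    have "ee a * ee (a**a**b**b) = ee a * ee (a'**a'**b'**b')"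
      using I1[OF na nb] I1[OF na' nb'] hs by simp
    then show ?thesis using False by simp
  next
    case a0: True
    show ?thesis
    proof (cases "ee b = 0")
      case False
      have "ee b * ee (a**a**b**b) = ee b * ee (a'**a'**b'**b')"
        using I2[OF na nb] I2[OF na' nb'] hs by simp
      then show ?thesis using False by simp
    next
      case b0: True
      show ?thesis
      proof (cases "ee (a**a) = 0")
        case False
        have "ee (a**a) * ee (a**a**b**b) = ee (a**a) * ee (a'**a'**b'**b')"
          using I3[OF na nb a0 b0] I3[OF na' nb'] a0 b0 hs by simp
        then show ?thesis using False by simp
      next
        case True
        then show ?thesis using L1[OF na nb a0 True] L1[OF na' nb'] a0 hs by simp
      qed
    qed
  qed
  show "ee (a**a**b**b**a) = ee (a'**a'**b'**b'**a')"
  proof (cases "ee (a**a) = 0")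
    case False
    have "ee (a**a) * ee (a**a**b**b**a) = ee (a**a) * ee (a'**a'**b'**b'**a')"
      using I5[OF na nb] I5[OF na' nb'] hs by simp
    then show ?thesis using False by simp
  next
    case aa0: True
    show ?thesis
    proof (cases "ee a = 0")
      case False
      have "(ee a * ee a) * ee (a**a**b**b**a) = (ee a * ee a) * ee (a'**a'**b'**b'**a')"
        using I4[OF na nb] I4[OF na' nb'] hs by simp
      then show ?thesis using False by simp
    next
      case True
      then show ?thesis using L3[OF na nb True aa0] L3[OF na' nb'] aa0 hs by simp
    qed
  qed
qed

lemma perm3:
  assumes "{i,j,k} = {1::nat,2,3}"
  shows "(i=1 \<and> j=2 \<and> k=3) \<or> (i=1 \<and> j=3 \<and> k=2) \<or> (i=2 \<and> j=1 \<and> k=3) \<or>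
         (i=2 \<and> j=3 \<and> k=1) \<or> (i=3 \<and> j=1 \<and> k=2) \<or> (i=3 \<and> j=2 \<and> k=1)"
proof -
  have "i \<in> {i,j,k}" "j \<in> {i,j,k}" "k \<in> {i,j,k}" by simp_all
  then have hi: "i = 1 \<or> i = 2 \<or> i = 3" and hj: "j = 1 \<or> j = 2 \<or> j = 3" and hk: "k = 1 \<or> k = 2 \<or> k = 3"
    unfolding assms by simp_all
  have "(1::nat) \<in> {1,2,3}" "(2::nat) \<in> {1,2,3}" "(3::nat) \<in> {1,2,3}" by simp_all
  then have h1: "1 \<in> {i,j,k}" and h2: "2 \<in> {i,j,k}" and h3: "3 \<in> {i,j,k}"
    unfolding assms[symmetric] by simp_all
  from hi hj hk h1 h2 h3 show ?thesis
    by (elim disjE; simp)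
qed

lemma P33'_cases:
  assumes "w \<in> P33'"
  shows "w \<in> {[2,2,3,3,1], [3,3,2,2,1], [2,2,3,3,2,1], [3,3,2,2,3,1],
     [1,1,2,2,3],[1,1,3,3,2],[2,2,1,1,3],[3,3,1,1,2],[1,1,2,2,1,3],[1,1,3,3,1,2],[2,2,1,1,2,3],[3,3,1,1,3,2],[1,1,2,2,3,3]}"
proof -
  from assms consider (A) i j k where "w = [i,i,j,j,k]" "{i,j,k} = {1,2,3}"
    | (B) i j k where "w = [i,i,j,j,i,k]" "{i,j,k} = {1,2,3}" | (C) "w = [1,1,2,2,3,3]"
    unfolding P33'_def by blast
  then show ?thesis
  proof cases
    case (A i j k)
    from perm3[OF A(2)] show ?thesis using A(1) by (elim disjE conjE) simp_all
  next
    case (B i j k)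
    from perm3[OF B(2)] show ?thesis using B(1) by (elim disjE conjE) simp_all
  next
    case C then show ?thesis by simp
  qed
qed

theorem lemma7p1:
  fixes A2 A3 B2 B3 :: "'a::{alg_closed_field, field_char_0} mat3"
  assumes "in_N33 (triple J1 A2 A3)"
      and "in_N33 (triple J1 B2 B3)"
      and "\<forall>w\<in>S33. trw (triple J1 A2 A3) w = trw (triple J1 B2 B3) w"
  shows "\<forall>w\<in>P33. trw (triple J1 A2 A3) w = trw (triple J1 B2 B3) w"
proof -
  have "nilpotent3 A2" "nilpotent3 A3" "nilpotent3 B2" "nilpotent3 B3"
    using assms(1,2) unfolding in_N33_def triple_def by auto
  note n = nil_facts[OF this(1)] nil_facts[OF this(2)] nil_facts[OF this(3)] nil_facts[OF this(4)]
  have na: "trace A2 = 0" "trace (A2**A2) = 0" "det A2 = 0" using n by auto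
  have nb: "trace A3 = 0" "trace (A3**A3) = 0" "det A3 = 0" using n by auto
  have na': "trace B2 = 0" "trace (B2**B2) = 0" "det B2 = 0" using n by auto
  have nb': "trace B3 = 0" "trace (B3**B3) = 0" "det B3 = 0" using n by auto
  have S: "[1,2] \<in> S33" "[1,3] \<in> S33" "[1,2,2] \<in> S33" "[1,3,3] \<in> S33" "[1,2,3] \<in> S33" "[1,3,2] \<in> S33"
     "[2,2,1,3] \<in> S33" "[2,2,3,1] \<in> S33" "[3,3,1,2] \<in> S33" "[3,3,2,1] \<in> S33"
     "[2,2,1,2,3] \<in> S33" "[3,3,1,3,2] \<in> S33" "[2,3] \<in> S33" "[2,2,3] \<in> S33" "[2,3,3] \<in> S33"
    unfolding S33_def by (simp; blast)+
  have E: "trw (triple J1 A2 A3) w = trw (triple J1 B2 B3) w" if "w \<in> S33" for w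
    using assms(3) that by blast
  note e = E[OF S(1)] E[OF S(2)] E[OF S(3)] E[OF S(4)] E[OF S(5)] E[OF S(6)] E[OF S(7)] E[OF S(8)]
    E[OF S(9)] E[OF S(10)] E[OF S(11)] E[OF S(12)] E[OF S(13)] E[OF S(14)] E[OF S(15)]
  have k: "ee A2 = ee B2" "ee A3 = ee B3" "ee (A2**A2) = ee (B2**B2)" "ee (A3**A3) = ee (B3**B3)"
     "ee (A2**A3) = ee (B2**B3)" "ee (A3**A2) = ee (B3**B2)" "ee (A3**A2**A2) = ee (B3**B2**B2)"
     "ee (A2**A2**A3) = ee (B2**B2**B3)" "ee (A2**A3**A3) = ee (B2**B3**B3)" "ee (A3**A3**A2) = ee (B3**B3**B2)"
     "ee (A2**A3**A2**A2) = ee (B2**B3**B2**B2)" "ee (A3**A2**A3**A3) = ee (B3**B2**B3**B3)"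
     "trace (A2**A3) = trace (B2**B3)" "trace (A2**A2**A3) = trace (B2**B2**B3)" "trace (A2**A3**A3) = trace (B2**B3**B3)"
    using e unfolding tw0 tw1 tw2 tw3 tw4 tw5 tw6 tw7 tw8 tw9 tw10 tw11 tw12 tw13 tw14 tw18 tw19 tw20 tw21 by auto
  have k': "trace (A3**A2) = trace (B3**B2)" "trace (A3**A3**A2) = trace (B3**B3**B2)" "trace (A3**A2**A2) = trace (B3**B2**B2)"
    using k(13-15) tsw1 tsw2 tsw3 by metis+
  have C1: "ee (A2**A2**A3**A3) = ee (B2**B2**B3**B3) \<and> ee (A2**A2**A3**A3**A2) = ee (B2**B2**B3**B3**B2)"
    by (rule core[OF na nb na' nb' k])
  have C2: "ee (A3**A3**A2**A2) = ee (B3**B3**B2**B2) \<and> ee (A3**A3**A2**A2**A3) = ee (B3**B3**B2**B2**B3)"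
    by (rule core[OF nb na nb' na' k(2,1,4,3,6,5,9,10,7,8,12,11) k'])
  show ?thesis
  proof
    fix w assume "w \<in> P33"
    then consider "w \<in> S33" | "w \<in> P33'" unfolding P33_def by blast
    then show "trw (triple J1 A2 A3) w = trw (triple J1 B2 B3) w"
    proof cases
      case 1 then show ?thesis by (rule E)
    next
      case 2
      have "w \<in> {[2,2,3,3,1], [3,3,2,2,1], [2,2,3,3,2,1], [3,3,2,2,3,1],
        [1,1,2,2,3],[1,1,3,3,2],[2,2,1,1,3],[3,3,1,1,2],[1,1,2,2,1,3],[1,1,3,3,1,2],[2,2,1,1,2,3],[3,3,1,1,3,2],[1,1,2,2,3,3]}"
        by (rule P33'_cases[OF 2])
      then have "w = [2,2,3,3,1] \<or> w = [3,3,2,2,1] \<or> w = [2,2,3,3,2,1] \<or> w = [3,3,2,2,3,1] \<or>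
        w = [1,1,2,2,3] \<or> w = [1,1,3,3,2] \<or> w = [2,2,1,1,3] \<or> w = [3,3,1,1,2] \<or> w = [1,1,2,2,1,3] \<or>
        w = [1,1,3,3,1,2] \<or> w = [2,2,1,1,2,3] \<or> w = [3,3,1,1,3,2] \<or> w = [1,1,2,2,3,3]"
        by (simp only: insert_iff empty_iff simp_thms)
      then show ?thesis
        by (elim disjE; hypsubst; simp only: tw18 tw19 tw20 tw21 tz0 tz1 tz2 tz3 tz4 tz5 tz6 tz7 tz8 C1[THEN conjunct1] C1[THEN conjunct2] C2[THEN conjunct1] C2[THEN conjunct2])
    qed
  qed
qed
end
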